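(* There is no equilateral hyperbolic Heron triangle.
   Context: All triangles are non-degenerate, bounded triangles in the hyperbolic plane (curvature $-1$), with side lengths $a,b,c>0$, opposite angles $\alpha,\beta,\gamma>0$, and area $A=\pi-\alpha-\beta-\gamma$. A hyperbolic Heron triangle is one with $e^a,e^b,e^c\in\mathbb{Q}$ and $e^{i\alpha},e^{i\beta},e^{i\gamma},e^{iA}\in\mathbb{Q}[i]$. *)

theory Defs
  imports Complex_Main
begin

text \<open>A (non-degenerate, bounded) triangle in the hyperbolic plane of curvature -1,
  described by its side lengths a b c and opposite angles al be ga. Such a triangle
  exists iff the side lengths are positive and satisfy the strict triangle inequalities;
  its angles are then determined by the hyperbolic law of cosines.\<close>
definition hyp_triangle :: "real \<Rightarrow> real \<Rightarrow> real \<Rightarrow> real \<Rightarrow> real \<Rightarrow> real \<Rightarrow> bool" where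
  "hyp_triangle a b c al be ga \<longleftrightarrow>
     a > 0 \<and> b > 0 \<and> c > 0 \<and> a < b + c \<and> b < a + c \<and> c < a + b \<and>
     0 < al \<and> al < pi \<and> 0 < be \<and> be < pi \<and> 0 < ga \<and> ga < pi \<and>
     cos al = (cosh b * cosh c - cosh a) / (sinh b * sinh c) \<and>
     cos be = (cosh a * cosh c - cosh b) / (sinh a * sinh c) \<and>
     cos ga = (cosh a * cosh b - cosh c) / (sinh a * sinh b)"

definition hyp_area :: "real \<Rightarrow> real \<Rightarrow> real \<Rightarrow> real" where
  "hyp_area al be ga = pi - al - be - ga"

definition gauss_rat :: "complex \<Rightarrow> bool" where
  "gauss_rat z \<longleftrightarrow> Re z \<in> \<rat> \<and> Im z \<in> \<rat>"

definition hyp_heron :: "real \<Rightarrow> real \<Rightarrow> real \<Rightarrow> real \<Rightarrow> real \<Rightarrow> real \<Rightarrow> bool" where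
  "hyp_heron a b c al be ga \<longleftrightarrow>
     hyp_triangle a b c al be ga \<and>
     exp a \<in> \<rat> \<and> exp b \<in> \<rat> \<and> exp c \<in> \<rat> \<and>
     gauss_rat (exp (\<i> * of_real al)) \<and> gauss_rat (exp (\<i> * of_real be)) \<and>
     gauss_rat (exp (\<i> * of_real ga)) \<and> gauss_rat (exp (\<i> * of_real (hyp_area al be ga)))"

end

theory Submission imports Defs "HOL-Computational_Algebra.Nth_Powers" begin

lemma coprime_primeI_int:
  fixes a b :: int
  assumes "\<And>p. prime p \<Longrightarrow> p dvd a \<Longrightarrow> p dvd b \<Longrightarrow> False"
  shows "coprime a b"
proof (rule ccontr)
  assume nc: "\<not> coprime a b"
  show False
  proof (cases "gcd a b = 0")
    case True
    then have "a = 0" "b = 0" by auto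
    then show False using assms[of 2] by auto
  next
    case False
    have "\<not> is_unit (gcd a b)" using nc by (simp add: coprime_iff_gcd_eq_1 is_unit_gcd)
    then obtain p where "p dvd gcd a b" "prime p" using prime_divisor_exists[OF False] by blast
    then show False using assms[of p] by auto
  qed
qed

lemma nth_split:
  fixes x y c :: int and d :: nat
  assumes "coprime x y" "x > 0" "y > 0" "x * y = c ^ d" "d > 0"
  shows "\<exists>r. r > 0 \<and> x = r ^ d"
proof -
  have "coprime (int (nat x)) (int (nat y))" using assms(1-3) by simp
  hence cp: "coprime (nat x) (nat y)" by (simp only: coprime_int_iff)
  have "c ^ d > 0" using assms by (metis mult_pos_pos)
  hence "x*y = \<bar>c\<bar>^d" using assms by (metis abs_of_pos power_abs)
  hence "nat (x*y) = nat \<bar>c\<bar> ^ d" by (simp add: nat_power_eq)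
  moreover have "nat (x*y) = nat x * nat y" using assms(2) by (simp add: nat_mult_distrib)
  ultimately have "nat x * nat y = nat \<bar>c\<bar> ^ d" by simp
  hence "is_nth_power d (nat x * nat y)" by auto
  then have "is_nth_power d (nat x)" using is_nth_power_mult_coprime_natD(1)[OF cp] assms by auto
  then obtain r where r: "nat x = r ^ d" by (auto elim: is_nth_powerE)
  have "x = int r ^ d" using r assms(2) by (metis int_nat_eq less_le of_nat_power)
  moreover have "int r > 0" using calculation assms(2) \<open>d>0\<close> by (cases "r = 0") (auto simp: power_0_left)
  ultimately show ?thesis by blast
qed


lemma sq_pair:
  fixes x y c :: int and d :: nat
  assumes "coprime x y" "x > 0" "y > 0" "x * y = c ^ d" "d > 0"
  shows "\<exists>r s. r > 0 \<and> s > 0 \<and> x = r ^ d \<and> y = s ^ d"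
proof -
  obtain r where "r>0" "x = r^d" using nth_split[OF assms] by blast
  moreover obtain s where "s>0" "y = s^d"
    using nth_split[of y x c d] assms by (auto simp: ac_simps)
  ultimately show ?thesis by blast
qed

lemma prime_dvd_2:
  fixes p :: int
  assumes "prime p" "p dvd 2" shows "p = 2"
proof -
  have "p > 1" using assms(1) by (simp add: prime_gt_1_int)
  moreover have "p \<le> 2" using assms(2) by (simp add: zdvd_imp_le)
  ultimately show ?thesis by simp
qed

lemma prime_odd_dvd4:
  fixes p t m :: int
  assumes "prime p" "p dvd 4 * t" "p dvd m" "odd m"
  shows "p dvd t"
proof -
  have np2: "\<not> p dvd 2"
  proof
    assume "p dvd 2"
    hence "p = 2" using prime_dvd_2 assms(1) by blast
    thus False using assms(3,4) by simp
  qed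
  have "4 * t = 2 * (2 * t)" by simp
  hence "p dvd 2 * (2 * t)" using assms(2) by simp
  hence "p dvd 2 * t" using np2 prime_dvd_mult_iff[OF assms(1)] by blast
  thus ?thesis using np2 prime_dvd_mult_iff[OF assms(1)] by blast
qed

lemma not_both_prime:
  fixes p r s :: int
  assumes "coprime r s" "prime p" "p dvd r" "p dvd s" shows False
proof -
  have "is_unit p" using coprime_common_divisor[OF assms(1,3,4)] .
  thus False using assms(2) not_prime_unit by blast
qed


lemma step:
  fixes m k n :: int
  assumes cop: "coprime m k" and mpos: "m > 0" and kpos: "k > 0" and npos: "n > 0"
    and om: "odd m" and ek: "even k"
    and eq: "m^4 + m^2*k^2 + k^4 = n^2"
  shows "\<exists>m' k' n'. m' > 0 \<and> k' > 0 \<and> n' > 0 \<and> n' < n \<and> m'^4 + m'^2*k'^2 + k'^4 = n'^2"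
proof -
  obtain h where k: "k = 2*h" using ek by blast
  have hpos: "h > 0" using k kpos by simp
  define D where "D = m^2 + 2*h^2"
  have nD: "n^2 = D^2 + 12*h^4" using eq unfolding k D_def by algebra
  have Dpos: "D > 0" unfolding D_def using mpos by (simp add: add_pos_nonneg)
  have "D^2 < n^2" using nD hpos by simp
  hence Dn: "D < n" using npos by (simp add: power_less_imp_less_base)
  have "n^2 = m^4 + 2*(2*m^2*h^2 + 8*h^4)" using eq unfolding k by algebra
  moreover have "odd (m^4)" using om by simp
  ultimately have "odd (n^2)" by simp
  hence on: "odd n" by simp
  have oD: "odd D" unfolding D_def using om by simp
  have "even (n + D)" using on oD by simp
  then obtain a where a: "n + D = 2*a" by blast
  define b where "b = a - D"
  have nab: "n = a + b" using a unfolding b_def by simp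
  have Dab: "D = a - b" using a unfolding b_def by simp
  have "4*(a*b) = 4*(3*h^4)" using nD unfolding nab Dab by algebra
  hence ab: "a*b = 3*h^4" by simp
  have bpos: "b > 0" using Dn a unfolding b_def by simp
  have apos: "a > 0" using bpos Dab Dpos by simp
  have n1: "n > 1" using Dn Dpos by simp
  have cop_ab: "coprime a b"
  proof (rule coprime_primeI_int)
    fix p :: int assume p: "prime p" "p dvd a" "p dvd b"
    have ph: "p dvd h"
    proof (rule ccontr)
      assume nph: "\<not> p dvd h"
      have "p^2 dvd a*b" using p(2,3) by (simp add: power2_eq_square mult_dvd_mono)
      hence "p^2 dvd 3*h^4" using ab by simp
      moreover have cph: "coprime (p^2) (h^4)" using prime_imp_coprime[OF p(1) nph] by simp
      ultimately have "p^2 dvd 3" using coprime_dvd_mult_left_iff[OF cph, of 3] by simp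
      hence "p^2 \<le> 3" by (simp add: zdvd_imp_le)
      moreover have "p \<ge> 2" using p(1) prime_ge_2_int by blast
      hence "2^2 \<le> p^2" by (rule power_mono) simp
      ultimately show False by simp
    qed
    have "p dvd D" using p(2,3) Dab by simp
    moreover have "p dvd 2*h^2" using ph by (simp add: power2_eq_square)
    ultimately have "p dvd D - 2*h^2" by (rule dvd_diff)
    hence "p dvd m^2" unfolding D_def by simp
    hence "p dvd m" using p(1) prime_dvd_power by blast
    moreover have "p dvd k" using ph k by simp
    ultimately show False using not_both_prime[OF cop p(1)] by blast
  qed
  have p3: "prime (3::int)" by simp
  have "3 dvd a*b" using ab by simp
  hence "3 dvd a \<or> 3 dvd b" using p3 prime_dvd_mult_iff by blast
  thus ?thesis
  proof
    assume "3 dvd b"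
    then obtain b1 where b1: "b = 3*b1" by blast
    have b1pos: "b1 > 0" using b1 bpos by simp
    have ab1: "a*b1 = h^4" using ab b1 by simp
    have cab1: "coprime a b1" using cop_ab b1 by simp
    obtain r s where rs: "r>0" "s>0" "a = r^4" "b1 = s^4"
      using sq_pair[OF cab1 apos b1pos ab1] by auto
    have "(r*s)^4 = h^4" using ab1 rs by (simp add: power_mult_distrib)
    hence hrs: "h = r*s" using rs hpos by (simp add: power_eq_iff_eq_base)
    have crs: "coprime r s" using cab1 rs by simp
    define X where "X = r^2 + s^2"
    define Y where "Y = r^2 - 3*s^2"
    have mXY: "m^2 = X*Y" using Dab unfolding X_def Y_def D_def b1 rs hrs by algebra
    have Xpos: "X > 0" unfolding X_def using rs by (simp add: add_pos_pos)
    have "m^2 > 0" using mpos by simp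
    hence "X*Y > 0" using mXY by simp
    hence Ypos: "Y > 0" using Xpos by (simp add: zero_less_mult_iff)
    have cXY: "coprime X Y"
    proof (rule coprime_primeI_int)
      fix p :: int assume p: "prime p" "p dvd X" "p dvd Y"
      have "p dvd m^2" using p mXY by simp
      hence pm: "p dvd m" using p(1) prime_dvd_power by blast
      have "p dvd X - Y" using p by simp
      hence "p dvd 4*(s^2)" unfolding X_def Y_def by simp
      hence "p dvd s^2" using prime_odd_dvd4[OF p(1) _ pm om] by blast
      hence ps: "p dvd s" using p(1) prime_dvd_power by blast
      have "p dvd 3*X + Y" using p by simp
      hence "p dvd 4*(r^2)" unfolding X_def Y_def by simp
      hence "p dvd r^2" using prime_odd_dvd4[OF p(1) _ pm om] by blast
      hence "p dvd r" using p(1) prime_dvd_power by blast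
      thus False using not_both_prime[OF crs p(1) _ ps] by blast
    qed
    obtain al be where ab2: "al>0" "be>0" "X = al^2" "Y = be^2"
      using sq_pair[OF cXY Xpos Ypos mXY[symmetric]] by auto
    have "odd (m^2)" using om by simp
    hence "odd (al^2 * be^2)" using mXY ab2 by metis
    hence oal: "odd al" and obe: "odd be" by auto
    have "al^2 - be^2 = 4*s^2" using ab2 unfolding X_def Y_def by simp
    moreover have "s^2 > 0" using rs by simp
    ultimately have "be^2 < al^2" by linarith
    hence bal: "be < al" using ab2 by (simp add: power_less_imp_less_base)
    have "even (al + be)" using oal obe by simp
    then obtain u where u: "al + be = 2*u" by blast
    define w where "w = u - be"
    have w: "al - be = 2*w" using u unfolding w_def by simp
    have upos: "u > 0" using u ab2 by simp
    have wpos: "w > 0" using w bal by simp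
    have alu: "al = u + w" using u w by simp
    have beu: "be = u - w" using u w by simp
    have alr: "al^2 = r^2 + s^2" using ab2 X_def by simp
    have ber: "be^2 = r^2 - 3*s^2" using ab2 Y_def by simp
    have "4*(u*w) = 4*(s^2)" using alu beu alr ber by algebra
    hence uw: "u*w = s^2" by simp
    have cuw: "coprime u w"
    proof (rule coprime_primeI_int)
      fix p :: int assume p: "prime p" "p dvd u" "p dvd w"
      have "p dvd al" using p alu by simp
      hence "p dvd al^2" by (simp add: power2_eq_square)
      hence "p dvd X" using ab2 by simp
      moreover have "p dvd be" using p beu by simp
      hence "p dvd be^2" by (simp add: power2_eq_square)
      hence "p dvd Y" using ab2 by simp
      ultimately show False using not_both_prime[OF cXY p(1)] by blast
    qed
    obtain M K where MK: "M>0" "K>0" "u = M^2" "w = K^2"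
      using sq_pair[OF cuw upos wpos uw] by auto
    have "4*(M^4 + M^2*K^2 + K^4) = 4*r^2" using alu beu alr ber MK by algebra
    hence "M^4 + M^2*K^2 + K^4 = r^2" by simp
    moreover have "r < n"
    proof -
      have "r \<le> r^4" using rs by (simp add: self_le_power)
      thus ?thesis using rs nab bpos by simp
    qed
    ultimately show ?thesis using MK rs by blast
  next
    assume "3 dvd a"
    then obtain a1 where a1: "a = 3*a1" by blast
    have a1pos: "a1 > 0" using a1 apos by simp
    have ab1: "a1*b = h^4" using ab a1 by simp
    have cab1: "coprime a1 b" using cop_ab a1 by simp
    obtain r s where rs: "r>0" "s>0" "a1 = r^4" "b = s^4"
      using sq_pair[OF cab1 a1pos bpos ab1] by auto
    have "(r*s)^4 = h^4" using ab1 rs by (simp add: power_mult_distrib)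
    hence hrs: "h = r*s" using rs hpos by (simp add: power_eq_iff_eq_base)
    have crs: "coprime r s" using cab1 rs by simp
    define X where "X = 3*r^2 + s^2"
    define Y where "Y = r^2 - s^2"
    have mXY: "m^2 = X*Y" using Dab unfolding X_def Y_def D_def a1 rs hrs by algebra
    have Xpos: "X > 0" unfolding X_def using rs by (simp add: add_pos_pos)
    have "m^2 > 0" using mpos by simp
    hence "X*Y > 0" using mXY by simp
    hence Ypos: "Y > 0" using Xpos by (simp add: zero_less_mult_iff)
    have cXY: "coprime X Y"
    proof (rule coprime_primeI_int)
      fix p :: int assume p: "prime p" "p dvd X" "p dvd Y"
      have "p dvd m^2" using p mXY by simp
      hence pm: "p dvd m" using p(1) prime_dvd_power by blast
      have "p dvd X - 3*Y" using p by simp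
      hence "p dvd 4*(s^2)" unfolding X_def Y_def by simp
      hence "p dvd s^2" using prime_odd_dvd4[OF p(1) _ pm om] by blast
      hence ps: "p dvd s" using p(1) prime_dvd_power by blast
      have "p dvd X + Y" using p by simp
      hence "p dvd 4*(r^2)" unfolding X_def Y_def by simp
      hence "p dvd r^2" using prime_odd_dvd4[OF p(1) _ pm om] by blast
      hence "p dvd r" using p(1) prime_dvd_power by blast
      thus False using not_both_prime[OF crs p(1) _ ps] by blast
    qed
    obtain al be where ab2: "al>0" "be>0" "X = al^2" "Y = be^2"
      using sq_pair[OF cXY Xpos Ypos mXY[symmetric]] by auto
    have "odd (m^2)" using om by simp
    hence "odd (al^2 * be^2)" using mXY ab2 by metis
    hence obe: "odd be" by auto
    have "s^2 < r^2" using Ypos unfolding Y_def by simp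
    hence srl: "s < r" using rs by (simp add: power_less_imp_less_base)
    have Yf: "(r+s)*(r-s) = be^2" using ab2 unfolding Y_def by algebra
    have c2: "coprime (r+s) (r-s)"
    proof (rule coprime_primeI_int)
      fix p :: int assume p: "prime p" "p dvd r+s" "p dvd r-s"
      have "p dvd (r+s)*(r-s)" using p(2) by (rule dvd_mult2)
      hence "p dvd be^2" using Yf by simp
      hence pb: "p dvd be" using p(1) prime_dvd_power by blast
      have "p dvd (r+s) + (r-s)" using p(2,3) by (rule dvd_add)
      moreover have "(r+s) + (r-s) = 2*r" by simp
      ultimately have "p dvd 2*r" by simp
      hence "p dvd 2*(2*r)" by (rule dvd_mult)
      hence "p dvd 4*r" by simp
      hence "p dvd r" using prime_odd_dvd4[OF p(1) _ pb obe] by blast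
      have "p dvd (r+s) - (r-s)" using p(2,3) by (rule dvd_diff)
      moreover have "(r+s) - (r-s) = 2*s" by simp
      ultimately have "p dvd 2*s" by simp
      hence "p dvd 2*(2*s)" by (rule dvd_mult)
      hence "p dvd 4*s" by simp
      hence "p dvd s" using prime_odd_dvd4[OF p(1) _ pb obe] by blast
      thus False using not_both_prime[OF crs p(1) \<open>p dvd r\<close>] by blast
    qed
    have rsp: "r + s > 0" "r - s > 0" using rs srl by auto
    obtain M K where MK: "M>0" "K>0" "r+s = M^2" "r-s = K^2"
      using sq_pair[OF c2 rsp Yf] by auto
    have "M^4 + M^2*K^2 + K^4 = al^2" using MK ab2 unfolding X_def by algebra
    moreover have "al < n"
    proof -
      have "r^2 \<le> r^4" "s^2 \<le> s^4" using rs by (auto intro: power_increasing)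
      hence "al^2 \<le> a + b" using ab2 a1 rs unfolding X_def by simp
      moreover have "n*1 < n*n" using n1 npos by (intro mult_strict_left_mono) auto
      ultimately have "al^2 < n^2" using nab by (simp add: power2_eq_square)
      thus ?thesis using npos ab2 by (simp add: power_less_imp_less_base)
    qed
    ultimately show ?thesis using MK ab2 by blast
  qed
qed


lemma both_odd_impossible:
  fixes m k n :: int
  assumes "odd m" "odd k" "m^4 + m^2*k^2 + k^4 = n^2"
  shows False
proof -
  obtain i where i: "m = 2*i+1" using assms(1) by (metis oddE)
  obtain j where j: "k = 2*j+1" using assms(2) by (metis oddE)
  have "n^2 = 2*(8*i^4 + 16*i^3 + 12*i^2 + 4*i + 2*(2*i^2 + 2*i)*(2*j^2 + 2*j)
        + 2*i^2 + 2*i + 2*j^2 + 2*j + 8*j^4 + 16*j^3 + 12*j^2 + 4*j + 1) + 1"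
    using assms(3) unfolding i j by algebra
  hence "odd (n^2)" by (metis odd_two_times_div_two_succ even_add even_mult_iff odd_one dvd_triv_left)
  hence "odd n" by simp
  then obtain l where l: "n = 2*l+1" by (metis oddE)
  define A where "A = 4*(i^2+i)^2 + 4*(i^2+i)*(j^2+j) + 4*(j^2+j)^2 + 3*(i^2+i) + 3*(j^2+j)"
  define B where "B = l^2 + l"
  have "4*A + 3 = 4*B + 1" using assms(3) unfolding i j l A_def B_def by algebra
  thus False by presburger
qed

lemma no_sol_aux:
  fixes N :: nat and m k n :: int
  shows "nat n = N \<Longrightarrow> m > 0 \<Longrightarrow> k > 0 \<Longrightarrow> n \<ge> 0 \<Longrightarrow> m^4 + m^2*k^2 + k^4 = n^2 \<Longrightarrow> False"
proof (induction N arbitrary: m k n rule: less_induct)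
  case (less N)
  note eq = less.prems(5)
  have "m^4 + m^2*k^2 + k^4 > 0" using less.prems(2) by (simp add: add_pos_nonneg)
  hence "n \<noteq> 0" using eq by auto
  hence npos: "n > 0" using less.prems(4) by simp
  have IH: "\<And>m' k' n'. m' > 0 \<Longrightarrow> k' > 0 \<Longrightarrow> n' > 0 \<Longrightarrow> n' < n \<Longrightarrow>
     m'^4 + m'^2*k'^2 + k'^4 = n'^2 \<Longrightarrow> False"
  proof -
    fix m' k' n' :: int
    assume h: "m' > 0" "k' > 0" "n' > 0" "n' < n" "m'^4 + m'^2*k'^2 + k'^4 = n'^2"
    have "nat n' < N" using h(3,4) less.prems(1) by simp
    thus False using less.IH[of "nat n'" n' m' k'] h by simp
  qed
  show False
  proof (cases "coprime m k")
    case False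
    define g where "g = gcd m k"
    have gpos: "g > 0" using less.prems(2) unfolding g_def by simp
    have g1: "g \<noteq> 1" using False unfolding g_def by (simp add: coprime_iff_gcd_eq_1)
    obtain m1 where m1: "m = g*m1" unfolding g_def by (metis gcd_dvd1 dvdE)
    obtain k1 where k1: "k = g*k1" unfolding g_def by (metis gcd_dvd2 dvdE)
    have m1pos: "m1 > 0" using m1 gpos less.prems(2) by (simp add: zero_less_mult_iff)
    have k1pos: "k1 > 0" using k1 gpos less.prems(3) by (simp add: zero_less_mult_iff)
    have eq2: "(g^2)^2 * (m1^4 + m1^2*k1^2 + k1^4) = n^2" using eq unfolding m1 k1 by algebra
    hence "(g^2)^2 dvd n^2" by (metis dvd_triv_left)
    moreover have "(g^2)^2 dvd n^2 \<longleftrightarrow> g^2 dvd n" by (rule pow_divides_pow_iff) simp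
    ultimately have "g^2 dvd n" by blast
    then obtain n1 where n1: "n = g^2 * n1" by blast
    have "g \<ge> 2" using gpos g1 by simp
    hence "2^2 \<le> g^2" by (rule power_mono) simp
    hence g2: "g^2 > 1" by simp
    have n1pos: "n1 > 0" using n1 npos g2 by (simp add: zero_less_mult_iff)
    have "n1 < n" using n1 g2 n1pos by simp
    moreover have "m1^4 + m1^2*k1^2 + k1^4 = n1^2"
    proof -
      have "(g^2)^2 * (m1^4 + m1^2*k1^2 + k1^4) = (g^2)^2 * n1^2" using eq2 n1 by (simp add: power_mult_distrib)
      thus ?thesis using gpos by simp
    qed
    ultimately show False using IH m1pos k1pos n1pos by blast
  next
    case True
    have "\<not> (even m \<and> even k)"
    proof
      assume "even m \<and> even k"
      hence "2 dvd m" "2 dvd k" by auto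
      thus False using not_both_prime[OF True, of 2] by simp
    qed
    moreover have "\<not> (odd m \<and> odd k)" using both_odd_impossible eq by blast
    ultimately consider "odd m \<and> even k" | "even m \<and> odd k" by blast
    thus False
    proof cases
      case 1
      then obtain m' k' n' where "m' > 0" "k' > 0" "n' > 0" "n' < n" "m'^4 + m'^2*k'^2 + k'^4 = n'^2"
        using step[OF True less.prems(2,3) npos _ _ eq] by blast
      thus False using IH by blast
    next
      case 2
      have eq': "k^4 + k^2*m^2 + m^4 = n^2" using eq by (simp add: algebra_simps)
      have True': "coprime k m" using True by (simp add: coprime_commute)
      obtain m' k' n' where "m' > 0" "k' > 0" "n' > 0" "n' < n" "m'^4 + m'^2*k'^2 + k'^4 = n'^2"
        using step[OF True' less.prems(3,2) npos _ _ eq'] 2 by blast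
      thus False using IH by blast
    qed
  qed
qed

lemma no_sol:
  fixes m k n :: int
  assumes "m > 0" "k > 0" "m^4 + m^2*k^2 + k^4 = n^2"
  shows False
proof -
  have "m^4 + m^2*k^2 + k^4 = \<bar>n\<bar>^2" using assms(3) by simp
  thus False using no_sol_aux[where N="nat \<bar>n\<bar>" and n="\<bar>n\<bar>" and m=m and k=k] assms(1,2) by simp
qed


lemma rat_part:
  fixes t z :: real
  assumes tQ: "t \<in> \<rat>" and zQ: "z \<in> \<rat>" and tpos: "t > 0"
    and eq: "t*(t^2+t+1) = z^2"
  shows False
proof -
  obtain p q where pq: "q > 0" "coprime p q" "t = of_int p / of_int q" using Rats_cases'[OF tQ] by blast
  obtain u v where uv: "v > 0" "coprime u v" "z = of_int u / of_int v" using Rats_cases'[OF zQ] by blast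
  have ppos: "p > 0" using tpos pq by (simp add: zero_less_divide_iff)
  define P where "P = p*q*(p^2+p*q+q^2)"
  have "real_of_int (P * v^2) = real_of_int ((u*q^2)^2)"
  proof -
    have "(real_of_int p / real_of_int q) * ((real_of_int p / real_of_int q)^2 + real_of_int p / real_of_int q + 1)
      = (real_of_int u / real_of_int v)^2" using eq pq uv by simp
    moreover have "real_of_int q \<noteq> 0" "real_of_int v \<noteq> 0" using pq uv by auto
    ultimately have H: "real_of_int p^3*real_of_int v^2 + real_of_int p^2*real_of_int q*real_of_int v^2
       + real_of_int p*real_of_int q^2*real_of_int v^2 = real_of_int q^3*real_of_int u^2"
      by (simp add: field_simps power2_eq_square power3_eq_cube)
    show ?thesis unfolding P_def of_int_mult of_int_add of_int_power using H by algebra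
  qed
  hence PV: "P * v^2 = (u*q^2)^2" by (simp only: of_int_eq_iff)
  have "v^2 dvd (u*q^2)^2" using PV by (metis dvd_triv_right)
  hence "v dvd u*q^2" using pow_divides_pow_iff[of 2 v "u*q^2"] by simp
  then obtain W where W: "u*q^2 = v*W" by blast
  have "P * v^2 = W^2 * v^2" using PV W by (simp add: power_mult_distrib)
  hence PW: "P = W^2" using uv by simp
  define Q where "Q = p^2+p*q+q^2"
  have Qpos: "Q > 0" unfolding Q_def using ppos pq by (simp add: add_pos_pos)
  have pqpos: "p*q > 0" using ppos pq by simp
  have cQ: "coprime (p*q) Q"
  proof (rule coprime_primeI_int)
    fix r :: int assume r: "prime r" "r dvd p*q" "r dvd Q"
    from r(1,2) have "r dvd p \<or> r dvd q" using prime_dvd_mult_iff by blast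
    thus False
    proof
      assume rp: "r dvd p"
      have "r dvd p*(p+q)" using rp by simp
      hence "r dvd Q - p*(p+q)" using r(3) by (rule dvd_diff[rotated])
      hence "r dvd q^2" unfolding Q_def by (simp add: algebra_simps power2_eq_square)
      hence "r dvd q" using r(1) prime_dvd_power by blast
      thus False using not_both_prime[OF pq(2) r(1) rp] by blast
    next
      assume rq: "r dvd q"
      have "r dvd q*(p+q)" using rq by simp
      hence "r dvd Q - q*(p+q)" using r(3) by (rule dvd_diff[rotated])
      hence "r dvd p^2" unfolding Q_def by (simp add: algebra_simps power2_eq_square)
      hence "r dvd p" using r(1) prime_dvd_power by blast
      thus False using not_both_prime[OF pq(2) r(1) _ rq] by blast
    qed
  qed
  have pqQ: "(p*q) * Q = W^2" using PW unfolding P_def Q_def by simp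
  obtain A B where AB: "A > 0" "B > 0" "p*q = A^2" "Q = B^2"
    using sq_pair[OF cQ pqpos Qpos pqQ] by auto
  obtain M K where MK: "M > 0" "K > 0" "p = M^2" "q = K^2"
    using sq_pair[OF pq(2) ppos pq(1) AB(3)] by auto
  have "M^4 + M^2*K^2 + K^4 = B^2" using AB(4) MK unfolding Q_def by algebra
  thus False using no_sol MK by blast
qed


theorem proposition4p1:
  fixes a b c al be ga :: real
  assumes "hyp_heron a b c al be ga"
    and "a = b" and "b = c"
  shows False
proof -
  have H: "hyp_heron a a a al be ga" using assms by simp
  hence tri: "hyp_triangle a a a al be ga" and tQ: "exp a \<in> \<rat>"
    and g: "gauss_rat (exp (\<i> * of_real al))" unfolding hyp_heron_def by auto
  have apos: "a > 0" and cal: "cos al = (cosh a * cosh a - cosh a) / (sinh a * sinh a)"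
    using tri unfolding hyp_triangle_def by auto
  have "Im (exp (\<i> * of_real al)) = sin al" by (simp add: Im_exp)
  hence SQ: "sin al \<in> \<rat>" using g unfolding gauss_rat_def by simp
  define t where "t = exp a"
  have tpos: "t > 1" using apos unfolding t_def by simp
  have ch: "cosh a = (t + 1/t)/2" unfolding t_def cosh_field_def by (simp add: exp_minus field_simps)
  have sh: "sinh a = (t - 1/t)/2" unfolding t_def sinh_field_def by (simp add: exp_minus field_simps)
  have c2: "cos al = (t^2+1)/(t+1)^2"
  proof -
    have e1: "cosh a * cosh a - cosh a = (t^2+1)*(t-1)^2/(4*t^2)" unfolding ch using tpos
      by (simp add: field_simps power2_eq_square)
    have e2: "sinh a * sinh a = (t-1)^2*(t+1)^2/(4*t^2)" unfolding sh using tpos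
      by (simp add: field_simps power2_eq_square)
    have "cos al = ((t^2+1)*(t-1)^2/(4*t^2)) / ((t-1)^2*(t+1)^2/(4*t^2))"
      using cal unfolding e1 e2 .
    also have "\<dots> = (t^2+1)/(t+1)^2"
    proof -
      have "(t-1)^2 \<noteq> 0" "t^2 \<noteq> 0" "(t+1)^2 \<noteq> 0" using tpos by auto
      thus ?thesis by (simp add: divide_simps)
    qed
    finally show ?thesis .
  qed
  define z where "z = sin al * (t+1)^2 / 2"
  have zQ: "z \<in> \<rat>" unfolding z_def using SQ tQ unfolding t_def
    by (intro Rats_divide Rats_mult Rats_power Rats_add) auto
  have "sin al ^ 2 = 1 - cos al ^ 2" by (simp add: sin_squared_eq)
  hence S2: "sin al ^ 2 = 1 - ((t^2+1)/(t+1)^2)^2" unfolding c2 .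
  have "z^2 = sin al ^ 2 * (t+1)^4 / 4" unfolding z_def by (simp add: power_divide power_mult_distrib flip: power_mult)
  also have "\<dots> = (1 - ((t^2+1)/(t+1)^2)^2) * (t+1)^4 / 4" unfolding S2 ..
  also have "\<dots> = (1 - ((t^2+1)/(t+1)^2)^2) * ((t+1)^2)^2 / 4" by (simp flip: power_mult)
  also have "\<dots> = (((t+1)^2)^2 - (t^2+1)^2) / 4"
  proof -
    have "(t+1)^2 \<noteq> 0" using tpos by simp
    hence "(1 - ((t^2+1)/(t+1)^2)^2) * ((t+1)^2)^2 = ((t+1)^2)^2 - (t^2+1)^2"
      by (simp add: power_divide field_simps)
    thus ?thesis by simp
  qed
  also have "\<dots> = t*(t^2+t+1)" by algebra
  finally have "t*(t^2+t+1) = z^2" by simp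
  moreover have "t \<in> \<rat>" using tQ unfolding t_def .
  moreover have "t > 0" using tpos by simp
  ultimately show False using rat_part[OF _ zQ] by blast
qed

end
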